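(* Let $n\ge 1$, and suppose that for each $j<n$, $\tau^j_0,\tau^j_1,\ldots,\tau^j_{m_j}$ is an $(n+1)$-train. Let $c:[\mathbb{N}]^2\rightarrow\{R,B\}$ be any coloring. Then there is a function $c^*:\bigcup_{j<n}\bigcup_{i\le m_j}\tau^j_i\rightarrow\{R,B\}$ such that for every $j<n$ and $i\le m_j$ and every $\iota\in\{R,B\}$: if $c$ restricted to $[\tau^j_i]^2$ is constantly equal to $\iota$, then there is some $a\in\tau^j_i$ with $c^*(a)=\overline{\iota}$.
   Context: $[X]^2$ denotes the set of unordered $2$-element subsets of $X$. For $\iota\in\{R,B\}$, $\overline{\iota}$ denotes the opposite color: $\overline{R}=B$, $\overline{B}=R$. For $m\ge 1$, an $m$-train is a finite sequence $\tau_0,\tau_1,\ldots,\tau_k$ of pairwise distinct subsets of $\mathbb{N}$, each of size exactly $m$, such that for every $i<k$ and every $a\in\tau_{i+1}\setminus\tau_i$, we have $a>\max\tau_i$ (i.e. $a$ exceeds every element of $\tau_i$). *)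

theory Defs
  imports Main
begin

datatype color = R | B

fun opp :: "color \<Rightarrow> color" where
  "opp R = B" | "opp B = R"

definition train :: "nat \<Rightarrow> nat set list \<Rightarrow> bool" where
  "train m ts \<longleftrightarrow>
     ts \<noteq> [] \<and> distinct ts \<and>
     (\<forall>t\<in>set ts. finite t \<and> card t = m) \<and>
     (\<forall>i. Suc i < length ts \<longrightarrow>
        (\<forall>a \<in> ts ! Suc i - ts ! i. \<forall>b \<in> ts ! i. b < a))"

definition monochromatic :: "(nat set \<Rightarrow> color) \<Rightarrow> nat set \<Rightarrow> color \<Rightarrow> bool" where
  "monochromatic c X \<iota> \<longleftrightarrow> (\<forall>e. e \<subseteq> X \<and> card e = 2 \<longrightarrow> c e = \<iota>)"

end

theory Submission
  imports Defs
begin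

lemma train_trans:
  assumes tr: "train m ts" and "i \<le> k" and "k < length ts"
  shows "(\<forall>y\<in>ts!i. \<exists>z\<in>ts!k. y \<le> z) \<and> (\<forall>x\<in>ts!k - ts!i. \<forall>y\<in>ts!i. y < x)"
  using assms(2,3)
proof (induction k)
  case 0 then show ?case by auto
next
  case (Suc k)
  show ?case
  proof (cases "i = Suc k")
    case True then show ?thesis by auto
  next
    case False
    then have ik: "i \<le> k" and kl: "Suc k < length ts" using Suc.prems by auto
    have IH: "(\<forall>y\<in>ts!i. \<exists>z\<in>ts!k. y \<le> z) \<and> (\<forall>x\<in>ts!k - ts!i. \<forall>y\<in>ts!i. y < x)"
      using Suc.IH ik kl by auto
    have step: "\<forall>a \<in> ts!Suc k - ts!k. \<forall>b \<in> ts!k. b < a" using tr kl unfolding train_def by blast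
    have neq: "ts!Suc k \<noteq> ts!k" using tr kl unfolding train_def by (simp add: nth_eq_iff_index_eq)
    have mem: "ts!Suc k \<in> set ts" "ts!k \<in> set ts" using kl by auto
    then have fin: "finite (ts!Suc k)" "finite (ts!k)" "card (ts!Suc k) = card (ts!k)"
      using tr unfolding train_def by auto
    have "\<not> ts!Suc k \<subseteq> ts!k" using card_subset_eq[of "ts!k" "ts!Suc k"] fin neq by auto
    then obtain w where w: "w \<in> ts!Suc k" "w \<notin> ts!k" by auto
    then have wgt: "\<forall>b\<in>ts!k. b < w" using step by auto
    show ?thesis
    proof
      show "\<forall>y\<in>ts!i. \<exists>z\<in>ts!Suc k. y \<le> z"
      proof
        fix y assume "y \<in> ts!i"
        then obtain z where "z \<in> ts!k" "y \<le> z" using IH by auto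
        then show "\<exists>z\<in>ts!Suc k. y \<le> z" using w wgt by (intro bexI[of _ w]) auto
      qed
      show "\<forall>x\<in>ts!Suc k - ts!i. \<forall>y\<in>ts!i. y < x"
      proof (intro ballI)
        fix x y assume x: "x \<in> ts!Suc k - ts!i" and y: "y \<in> ts!i"
        show "y < x"
        proof (cases "x \<in> ts!k")
          case True then show ?thesis using IH x y by auto
        next
          case False
          then have "\<forall>b\<in>ts!k. b < x" using step x by auto
          moreover obtain z where "z \<in> ts!k" "y \<le> z" using IH y by auto
          ultimately show ?thesis by fastforce
        qed
      qed
    qed
  qed
qed

lemma ex_max:
  assumes "finite A" "A \<noteq> {}"
  shows "\<exists>x\<in>A. \<forall>y\<in>A. (f y::nat) \<le> f x"
proof -
  have "Max (f`A) \<in> f`A" using assms by simp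
  then obtain x where x: "x \<in> A" "f x = Max (f`A)" by auto
  have "\<forall>y\<in>A. f y \<le> f x" using x assms by simp
  then show ?thesis using x by blast
qed

lemma mono_unique:
  assumes "monochromatic c X \<iota>" "monochromatic c X \<kappa>" "a \<in> X" "b \<in> X" "a \<noteq> b"
  shows "\<iota> = \<kappa>"
proof -
  have "{a,b} \<subseteq> X" "card {a,b} = 2" using assms by auto
  then show ?thesis using assms(1,2) unfolding monochromatic_def by metis
qed

theorem mainTheorem1:
  fixes n :: nat and T :: "nat \<Rightarrow> nat set list" and c :: "nat set \<Rightarrow> color"
  assumes "n \<ge> 1"
    and "\<forall>j<n. train (n + 1) (T j)"
  shows "\<exists>cstar :: nat \<Rightarrow> color. \<forall>j<n. \<forall>i<length (T j). \<forall>\<iota>.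
           monochromatic c (T j ! i) \<iota> \<longrightarrow> (\<exists>a \<in> T j ! i. cstar a = opp \<iota>)"
proof -
  have basic: "finite (T j ! i) \<and> card (T j ! i) = n + 1" if "j < n" "i < length (T j)" for j i
    using assms(2) that unfolding train_def by (meson nth_mem)
  define P where "P a x \<longleftrightarrow> (case x of (j,i,\<iota>) \<Rightarrow> j<n \<and> i<length (T j) \<and> a \<in> T j!i \<and>
      monochromatic c (T j!i) \<iota> \<and> (\<forall>j' i' \<iota>'. j'<n \<and> i'<length (T j') \<and> a \<in> T j'!i' \<and>
      monochromatic c (T j'!i') \<iota>' \<longrightarrow> Max (T j'!i') \<le> Max (T j!i)))" for a x
  have ex: "\<forall>a. \<exists>x. (\<exists>j i \<iota>. j<n \<and> i<length (T j) \<and> a \<in> T j!i \<and> monochromatic c (T j!i) \<iota>) \<longrightarrow> P a x"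
  proof
    fix a
    show "\<exists>x. (\<exists>j i \<iota>. j<n \<and> i<length (T j) \<and> a \<in> T j!i \<and> monochromatic c (T j!i) \<iota>) \<longrightarrow> P a x"
    proof (cases "\<exists>j i \<iota>. j<n \<and> i<length (T j) \<and> a \<in> T j!i \<and> monochromatic c (T j!i) \<iota>")
      case False then show ?thesis by blast
    next
      case True
      define O' where "O' = {(j,i). j<n \<and> i<length (T j) \<and> a \<in> T j!i \<and> (\<exists>\<iota>. monochromatic c (T j!i) \<iota>)}"
      have "O' \<subseteq> Sigma {..<n} (\<lambda>j. {..<length (T j)})" unfolding O'_def by auto
      then have "finite O'" by (rule finite_subset) auto
      moreover have "O' \<noteq> {}" using True unfolding O'_def by auto
      ultimately obtain x where x: "x \<in> O'" "\<forall>y\<in>O'. (\<lambda>(j,i). Max (T j!i)) y \<le> (\<lambda>(j,i). Max (T j!i)) x"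
        using ex_max[of O' "\<lambda>(j,i). Max (T j!i)"] by blast
      obtain j i where ji: "x = (j,i)" by (cases x) auto
      obtain \<iota> where "monochromatic c (T j!i) \<iota>" using x(1) ji unfolding O'_def by auto
      then have "P a (j,i,\<iota>)" using x ji unfolding P_def O'_def by fastforce
      then show ?thesis by blast
    qed
  qed
  from choice[OF ex] obtain g where g:
    "\<And>a. (\<exists>j i \<iota>. j<n \<and> i<length (T j) \<and> a \<in> T j!i \<and> monochromatic c (T j!i) \<iota>) \<Longrightarrow> P a (g a)"
    by blast
  define cstar where "cstar a = opp (snd (snd (g a)))" for a
  have "\<forall>j<n. \<forall>i<length (T j). \<forall>\<iota>.
           monochromatic c (T j ! i) \<iota> \<longrightarrow> (\<exists>a \<in> T j ! i. cstar a = opp \<iota>)"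
  proof (intro allI impI)
    fix j i \<iota> assume j: "j < n" and i: "i < length (T j)" and m: "monochromatic c (T j ! i) \<iota>"
    show "\<exists>a \<in> T j ! i. cstar a = opp \<iota>"
    proof (rule ccontr)
      assume nc: "\<not> (\<exists>a \<in> T j ! i. cstar a = opp \<iota>)"
      have Pa: "P a (g a)" if "a \<in> T j!i" for a using g j i m that by blast
      have ne: "snd (snd (g a)) \<noteq> \<iota>" if "a \<in> T j!i" for a
        using nc that unfolding cstar_def by auto
      have fin: "finite (T j!i)" and cd: "card (T j!i) = n+1" using basic j i by auto
      have "\<not> inj_on (\<lambda>a. fst (g a)) (T j!i)"
      proof
        assume inj: "inj_on (\<lambda>a. fst (g a)) (T j!i)"
        have "(\<lambda>a. fst (g a)) ` (T j!i) \<subseteq> {..<n}"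
        proof
          fix x assume "x \<in> (\<lambda>a. fst (g a)) ` (T j!i)"
          then obtain a where a: "a \<in> T j!i" "x = fst (g a)" by blast
          obtain ja ia \<iota>a where ga: "g a = (ja,ia,\<iota>a)" by (cases "g a") auto
          show "x \<in> {..<n}" using Pa[OF a(1)] a(2) ga unfolding P_def by simp
        qed
        then have "card (T j!i) \<le> card {..<n}" using card_inj_on_le[OF inj] by blast
        then show False using cd by simp
      qed
      then obtain a b where ab: "a \<in> T j!i" "b \<in> T j!i" "a \<noteq> b" "fst (g a) = fst (g b)"
        unfolding inj_on_def by blast
      obtain ja ia \<iota>a where ga: "g a = (ja,ia,\<iota>a)" by (cases "g a") auto
      obtain jb ib \<iota>b where gb: "g b = (jb,ib,\<iota>b)" by (cases "g b") auto
      have jab: "jb = ja" using ab(4) ga gb by simp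
      have A: "ja<n" "ia<length (T ja)" "a \<in> T ja!ia" "monochromatic c (T ja!ia) \<iota>a"
        "Max (T j!i) \<le> Max (T ja!ia)"
        using Pa[OF ab(1)] ab(1) j i m unfolding P_def ga by auto
      have Bb: "ib<length (T ja)" "b \<in> T ja!ib" "monochromatic c (T ja!ib) \<iota>b"
        "Max (T j!i) \<le> Max (T ja!ib)"
        using Pa[OF ab(2)] ab(2) j i m unfolding P_def gb jab by auto
      have nia: "\<iota>a \<noteq> \<iota>" using ne[OF ab(1)] ga by simp
      have nib: "\<iota>b \<noteq> \<iota>" using ne[OF ab(2)] gb by simp
      have b_not: "b \<notin> T ja!ia"
      proof
        assume b: "b \<in> T ja!ia"
        have "{a,b} \<subseteq> T ja!ia" "{a,b} \<subseteq> T j!i" "card {a,b} = 2" using b A ab by auto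
        then show False using A(4) m nia unfolding monochromatic_def by metis
      qed
      have a_not: "a \<notin> T ja!ib"
      proof
        assume a: "a \<in> T ja!ib"
        have "{a,b} \<subseteq> T ja!ib" "{a,b} \<subseteq> T j!i" "card {a,b} = 2" using a Bb ab by auto
        then show False using Bb(3) m nib unfolding monochromatic_def by metis
      qed
      have trj: "train (n+1) (T ja)" using assms(2) A(1) by auto
      have bleT: "b \<le> Max (T j!i)" "a \<le> Max (T j!i)" using fin ab by auto
      have finA: "finite (T ja!ia)" "T ja!ia \<noteq> {}" using basic[OF A(1) A(2)] by auto
      have finB: "finite (T ja!ib)" "T ja!ib \<noteq> {}" using basic[OF A(1) Bb(1)] by auto
      consider "ia = ib" | "ia < ib" | "ib < ia" by linarith
      then show False
      proof cases
        case 1 then show False using b_not Bb(2) by simp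
      next
        case 2
        have "\<forall>y\<in>T ja!ia. y < b"
          using train_trans[OF trj, of ia ib] 2 Bb(1) Bb(2) b_not by auto
        moreover have "Max (T ja!ia) \<in> T ja!ia" using finA by simp
        ultimately have "Max (T ja!ia) < b" by blast
        then show False using A(5) bleT by linarith
      next
        case 3
        have "\<forall>y\<in>T ja!ib. y < a"
          using train_trans[OF trj, of ib ia] 3 A(2) A(3) a_not by auto
        moreover have "Max (T ja!ib) \<in> T ja!ib" using finB by simp
        ultimately have "Max (T ja!ib) < a" by blast
        then show False using Bb(4) bleT by linarith
      qed
    qed
  qed
  then show ?thesis by blast
qed

end
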